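(* Let $G$ be a finite simple graph and $d,M$ positive integers. Suppose $\xi(G)\le d$ and $G$ contains $M$ pairwise vertex-disjoint cliques of size $d$. Then $\Delta_{Md}\le\widehat{G}\otimes\mathcal{C}_d$.
   Context: The orthogonal rank $\xi(G)$ is the smallest $d$ such that there are unit vectors $(u_g)_{g\in V(G)}$ in $\mathbb{C}^d$ with $\langle u_g|u_{g'}\rangle=0$ whenever $g,g'$ are adjacent. A noncommutative graph is a subspace $S\subseteq B(\mathcal{H})$ ($\mathcal{H}$ finite-dimensional) with $I\in S$, $S^*=S$. A cohomomorphism from $T\subseteq B(\mathcal{K})$ to $S\subseteq B(\mathcal{H})$ is a finite family of linear maps $E_i:\mathcal{K}\to\mathcal{H}$ with $\sum_iE_i^*E_i=I$ and $E_i^*SE_j\subseteq T$ for all $i,j$; $T\le S$ if one exists. $S\otimes T=\operatorname{span}\{A\otimes B:A\in S,B\in T\}$. $\widehat{G}=\operatorname{span}\{|x\rangle\langle x'|:x,x'\in V(G),\ x=x'\text{ or }x\sim x'\}\subseteq B(\mathbb{C}^{V(G)})$; $\mathcal{C}_d=\mathbb{C}I\subseteq B(\mathbb{C}^d)$; $\Delta_n\subseteq B(\mathbb{C}^n)$ is the subspace of operators diagonal in the standard basis (the noncommutative graph of the edgeless graph on $n$ vertices). *)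

theory Defs
  imports "Jordan_Normal_Form.Schur_Decomposition"
begin

text \<open>Finite simple graphs are given by a vertex count n (vertices 0..n-1)
  and a symmetric irreflexive adjacency relation E.\<close>

definition simple_graph :: "nat \<Rightarrow> (nat \<Rightarrow> nat \<Rightarrow> bool) \<Rightarrow> bool" where
  "simple_graph n E \<longleftrightarrow> (\<forall>x<n. \<forall>y<n. E x y \<longleftrightarrow> E y x) \<and> (\<forall>x<n. \<not> E x x)"

definition cinner :: "complex vec \<Rightarrow> complex vec \<Rightarrow> complex" where
  "cinner u v = (\<Sum>i<dim_vec u. cnj (u $ i) * v $ i)"

definition orth_rep :: "nat \<Rightarrow> (nat \<Rightarrow> nat \<Rightarrow> bool) \<Rightarrow> nat \<Rightarrow> (nat \<Rightarrow> complex vec) \<Rightarrow> bool" where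
  "orth_rep n E d u \<longleftrightarrow>
     (\<forall>x<n. u x \<in> carrier_vec d \<and> cinner (u x) (u x) = 1) \<and>
     (\<forall>x<n. \<forall>y<n. E x y \<longrightarrow> cinner (u x) (u y) = 0)"

definition orth_rank :: "nat \<Rightarrow> (nat \<Rightarrow> nat \<Rightarrow> bool) \<Rightarrow> nat" where
  "orth_rank n E = (LEAST d. \<exists>u. orth_rep n E d u)"

definition mspan :: "nat \<Rightarrow> complex mat set \<Rightarrow> complex mat set" where
  "mspan N X = {foldr (\<lambda>(c, A) acc. c \<cdot>\<^sub>m A + acc) cs (0\<^sub>m N N) | cs.
                  \<forall>(c, A) \<in> set cs. A \<in> X \<and> A \<in> carrier_mat N N}"

definition kron :: "complex mat \<Rightarrow> complex mat \<Rightarrow> complex mat" where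
  "kron A B = mat (dim_row A * dim_row B) (dim_col A * dim_col B)
     (\<lambda>(i, j). A $$ (i div dim_row B, j div dim_col B) * B $$ (i mod dim_row B, j mod dim_col B))"

definition ncg_tensor :: "nat \<Rightarrow> nat \<Rightarrow> complex mat set \<Rightarrow> complex mat set \<Rightarrow> complex mat set" where
  "ncg_tensor n m S T = mspan (n * m) {kron A B | A B. A \<in> S \<and> B \<in> T}"

definition mat_unit :: "nat \<Rightarrow> nat \<Rightarrow> nat \<Rightarrow> complex mat" where
  "mat_unit n i j = mat n n (\<lambda>(a, b). if a = i \<and> b = j then 1 else 0)"

definition graph_ncg :: "nat \<Rightarrow> (nat \<Rightarrow> nat \<Rightarrow> bool) \<Rightarrow> complex mat set" where
  "graph_ncg n E = mspan n {mat_unit n i j | i j. i < n \<and> j < n \<and> (i = j \<or> E i j)}"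

definition scalar_ncg :: "nat \<Rightarrow> complex mat set" where
  "scalar_ncg d = mspan d {1\<^sub>m d}"

definition diag_ncg :: "nat \<Rightarrow> complex mat set" where
  "diag_ncg N = {A \<in> carrier_mat N N. \<forall>i<N. \<forall>j<N. i \<noteq> j \<longrightarrow> A $$ (i, j) = 0}"

text \<open>T \<le> S for T \<subseteq> B(C^k), S \<subseteq> B(C^h): there is a cohomomorphism from T to S,
  i.e. finitely many E_i : C^k \<rightarrow> C^h with \<Sum> E_i* E_i = I and E_i* S E_j \<subseteq> T.\<close>
definition ncg_le :: "nat \<Rightarrow> complex mat set \<Rightarrow> nat \<Rightarrow> complex mat set \<Rightarrow> bool" where
  "ncg_le k T h S \<longleftrightarrow> (\<exists>Es :: complex mat list.
     (\<forall>F \<in> set Es. F \<in> carrier_mat h k) \<and>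
     foldr (\<lambda>F acc. mat_adjoint F * F + acc) Es (0\<^sub>m k k) = 1\<^sub>m k \<and>
     (\<forall>i < length Es. \<forall>j < length Es. \<forall>A \<in> S. mat_adjoint (Es ! i) * A * (Es ! j) \<in> T))"

end

theory Submission imports Defs begin

lemma adj_entry:
  assumes "A \<in> carrier_mat nr nc" "i < nc" "j < nr"
  shows "mat_adjoint A $$ (i,j) = cnj (A $$ (j,i))"
  using assms unfolding mat_adjoint_def by (simp add: mat_of_rows_def)

lemma adj_carrier:
  assumes "A \<in> carrier_mat nr nc"
  shows "mat_adjoint A \<in> carrier_mat nc nr"
  using assms unfolding mat_adjoint_def by (simp add: mat_of_rows_def)

lemma mult_entry:
  assumes "A \<in> carrier_mat m k" "B \<in> carrier_mat k l" "i < m" "j < l"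
  shows "(A*B) $$ (i,j) = (\<Sum>t<k. A $$ (i,t) * B $$ (t,j))"
  using assms by (auto simp: scalar_prod_def atLeast0LessThan intro!: sum.cong)

lemma mspan_induct:
  assumes "B \<in> mspan N X" "P (0\<^sub>m N N)"
    "\<And>c A acc. A \<in> X \<Longrightarrow> A \<in> carrier_mat N N \<Longrightarrow> P acc \<Longrightarrow> P (c \<cdot>\<^sub>m A + acc)"
  shows "P B"
proof -
  obtain cs where B: "B = foldr (\<lambda>(c, A) acc. c \<cdot>\<^sub>m A + acc) cs (0\<^sub>m N N)"
    and cs: "\<forall>(c, A) \<in> set cs. A \<in> X \<and> A \<in> carrier_mat N N"
    using assms(1) unfolding mspan_def by blast
  have "P (foldr (\<lambda>(c, A) acc. c \<cdot>\<^sub>m A + acc) cs (0\<^sub>m N N))" using cs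
    by (induction cs) (auto intro: assms(3) simp: assms(2) split: prod.splits)
  thus ?thesis using B by simp
qed

lemma block_sum:
  fixes f :: "nat \<Rightarrow> complex"
  assumes "a < n" "\<forall>r<n*d. r div d \<noteq> a \<longrightarrow> f r = 0"
  shows "(\<Sum>r<n*d. f r) = (\<Sum>p<d. f (a*d+p))"
proof -
  have sub: "(\<lambda>p. a*d+p) ` {..<d} \<subseteq> {..<n*d}"
  proof
    fix x assume "x \<in> (\<lambda>p. a*d+p) ` {..<d}"
    then obtain p where p: "p < d" "x = a*d+p" by auto
    have "(a+1)*d \<le> n*d" using assms(1) by (intro mult_le_mono1) simp
    thus "x \<in> {..<n*d}" using p by auto
  qed
  have "(\<Sum>r<n*d. f r) = (\<Sum>r\<in>(\<lambda>p. a*d+p) ` {..<d}. f r)"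
  proof (rule sum.mono_neutral_right[OF _ sub])
    show "\<forall>i\<in>{..<n*d} - (\<lambda>p. a*d+p) ` {..<d}. f i = 0"
    proof
      fix i assume i: "i \<in> {..<n*d} - (\<lambda>p. a*d+p) ` {..<d}"
      show "f i = 0"
      proof (cases "i div d = a")
        case True
        have "d > 0" using i by (cases d) auto
        hence "i = a*d + i mod d" "i mod d < d" using True by (auto simp: mult.commute)
        hence False using i by blast
        thus ?thesis ..
      qed (use assms i in auto)
    qed
  qed auto
  also have "\<dots> = (\<Sum>p<d. f (a*d+p))" by (subst sum.reindex) (auto simp: inj_on_def)
  finally show ?thesis .
qed


lemma graph_pat:
  assumes "A \<in> graph_ncg n E"
  shows "A \<in> carrier_mat n n \<and> (\<forall>i<n. \<forall>j<n. i \<noteq> j \<and> \<not> E i j \<longrightarrow> A $$ (i,j) = 0)"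
  using assms unfolding graph_ncg_def
proof (rule mspan_induct)
  fix c G and acc :: "complex mat"
  assume G: "G \<in> {mat_unit n i j |i j. i < n \<and> j < n \<and> (i = j \<or> E i j)}"
    and "acc \<in> carrier_mat n n \<and> (\<forall>i<n. \<forall>j<n. i \<noteq> j \<and> \<not> E i j \<longrightarrow> acc $$ (i, j) = 0)"
  then show "c \<cdot>\<^sub>m G + acc \<in> carrier_mat n n \<and>
        (\<forall>i<n. \<forall>j<n. i \<noteq> j \<and> \<not> E i j \<longrightarrow> (c \<cdot>\<^sub>m G + acc) $$ (i, j) = 0)"
    by (auto simp: mat_unit_def)
qed auto

lemma scalar_pat:
  assumes "B \<in> scalar_ncg d"
  shows "B \<in> carrier_mat d d \<and> (\<exists>b. \<forall>i<d. \<forall>j<d. B $$ (i,j) = (if i = j then b else 0))"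
  using assms unfolding scalar_ncg_def
proof (rule mspan_induct)
  fix c and G acc :: "complex mat"
  assume G: "G \<in> {1\<^sub>m d}"
    and h: "acc \<in> carrier_mat d d \<and> (\<exists>b. \<forall>i<d. \<forall>j<d. acc $$ (i,j) = (if i = j then b else 0))"
  then obtain b where b: "\<forall>i<d. \<forall>j<d. acc $$ (i,j) = (if i = j then b else 0)" by blast
  have "\<forall>i<d. \<forall>j<d. (c \<cdot>\<^sub>m G + acc) $$ (i,j) = (if i = j then c + b else 0)"
    using G h b by auto
  then show "c \<cdot>\<^sub>m G + acc \<in> carrier_mat d d \<and> (\<exists>b. \<forall>i<d. \<forall>j<d. (c \<cdot>\<^sub>m G + acc) $$ (i,j) = (if i = j then b else 0))"
    using G h by auto
qed (rule conjI, simp, rule exI[of _ 0], simp)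

definition blk :: "nat \<Rightarrow> nat \<Rightarrow> (nat \<Rightarrow> nat \<Rightarrow> bool) \<Rightarrow> complex mat \<Rightarrow> bool" where
 "blk n d E K \<longleftrightarrow> K \<in> carrier_mat (n*d) (n*d) \<and>
   (\<forall>r<n*d. \<forall>s<n*d. K $$ (r,s) = (if r mod d = s mod d then K $$ (r div d * d, s div d * d) else 0)) \<and>
   (\<forall>r<n*d. \<forall>s<n*d. r div d \<noteq> s div d \<longrightarrow> \<not> E (r div d) (s div d) \<longrightarrow> K $$ (r,s) = 0)"

lemma divle: "(r::nat) < n*d \<Longrightarrow> r div d * d < n*d"
proof -
  assume "r < n*d"
  moreover have "r div d * d \<le> r" by (rule div_times_less_eq_dividend)
  ultimately show ?thesis by linarith
qed

lemma blkD1: "blk n d E K \<Longrightarrow> r < n*d \<Longrightarrow> s < n*d \<Longrightarrow>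
  K $$ (r,s) = (if r mod d = s mod d then K $$ (r div d * d, s div d * d) else 0)"
  unfolding blk_def by blast

lemma blkD2: "blk n d E K \<Longrightarrow> r < n*d \<Longrightarrow> s < n*d \<Longrightarrow> r div d \<noteq> s div d \<Longrightarrow> \<not> E (r div d) (s div d) \<Longrightarrow>
  K $$ (r,s) = 0"
  unfolding blk_def by blast

lemma blk_lin:
  assumes "blk n d E G" "blk n d E K"
  shows "blk n d E (c \<cdot>\<^sub>m G + K)"
proof -
  have G: "G \<in> carrier_mat (n*d) (n*d)" and K: "K \<in> carrier_mat (n*d) (n*d)" using assms by (auto simp: blk_def)
  have e: "(c \<cdot>\<^sub>m G + K) $$ (r,s) = c * G $$ (r,s) + K $$ (r,s)" if "r < n*d" "s < n*d" for r s
    using G K that by simp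
  show ?thesis unfolding blk_def
  proof (intro conjI allI impI)
    show "c \<cdot>\<^sub>m G + K \<in> carrier_mat (n * d) (n * d)" using G K by simp
  next
    fix r s assume rs: "r < n*d" "s < n*d"
    show "(c \<cdot>\<^sub>m G + K) $$ (r, s) = (if r mod d = s mod d then (c \<cdot>\<^sub>m G + K) $$ (r div d * d, s div d * d) else 0)"
    proof -
      have "G $$ (r,s) = (if r mod d = s mod d then G $$ (r div d * d, s div d * d) else 0)"
        "K $$ (r,s) = (if r mod d = s mod d then K $$ (r div d * d, s div d * d) else 0)"
        using assms rs unfolding blk_def by blast+
      then show ?thesis unfolding e[OF rs] e[OF divle[OF rs(1)] divle[OF rs(2)]] by simp
    qed
  next
    fix r s assume rs: "r < n*d" "s < n*d" "r div d \<noteq> s div d" "\<not> E (r div d) (s div d)"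
    show "(c \<cdot>\<^sub>m G + K) $$ (r, s) = 0"
    proof -
      have "G $$ (r,s) = 0" "K $$ (r,s) = 0"
        using assms rs unfolding blk_def by blast+
      then show ?thesis unfolding e[OF rs(1,2)] by simp
    qed
  qed
qed

lemma blk_zero: "blk n d E (0\<^sub>m (n*d) (n*d))"
  unfolding blk_def
proof (intro conjI allI impI)
  fix r s assume rs: "r < n*d" "s < n*d"
  have "0\<^sub>m (n*d) (n*d) $$ (r div d * d, s div d * d) = (0::complex)"
    using divle[OF rs(1)] divle[OF rs(2)] by (rule index_zero_mat(1))
  then show "0\<^sub>m (n*d) (n*d) $$ (r, s) = (if r mod d = s mod d then 0\<^sub>m (n*d) (n*d) $$ (r div d * d, s div d * d) else (0::complex))"
    using rs by simp
qed auto

lemma blk_kron: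
  assumes "0 < d" "A \<in> graph_ncg n E" "B \<in> scalar_ncg d"
  shows "blk n d E (kron A B)"
proof -
  obtain b where A: "A \<in> carrier_mat n n" "\<forall>i<n. \<forall>j<n. i \<noteq> j \<and> \<not> E i j \<longrightarrow> A $$ (i,j) = 0"
    and B: "B \<in> carrier_mat d d" "\<forall>i<d. \<forall>j<d. B $$ (i,j) = (if i = j then b else 0)"
    using graph_pat[OF assms(2)] scalar_pat[OF assms(3)] by blast
  have e: "kron A B $$ (r,s) = A $$ (r div d, s div d) * B $$ (r mod d, s mod d)" if "r < n*d" "s < n*d" for r s
    using A B that unfolding kron_def by simp
  have lt: "r div d < n" if "r < n*d" for r using that
    by (simp add: less_mult_imp_div_less)
  show ?thesis unfolding blk_def
  proof (intro conjI allI impI)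
    show "kron A B \<in> carrier_mat (n * d) (n * d)" using A B unfolding kron_def by simp
  next
    fix r s assume rs: "r < n*d" "s < n*d"
    show "kron A B $$ (r, s) = (if r mod d = s mod d then kron A B $$ (r div d * d, s div d * d) else 0)"
      unfolding e[OF rs] e[OF divle[OF rs(1)] divle[OF rs(2)]] using B assms(1) by auto
  next
    fix r s assume rs: "r < n*d" "s < n*d" "r div d \<noteq> s div d" "\<not> E (r div d) (s div d)"
    show "kron A B $$ (r, s) = 0"
      unfolding e[OF rs(1,2)] using A rs lt by auto
  qed
qed

lemma blk_tensor:
  assumes "0 < d" "K \<in> ncg_tensor n d (graph_ncg n E) (scalar_ncg d)"
  shows "blk n d E K"
  using assms(2) unfolding ncg_tensor_def
proof (rule mspan_induct)
  show "blk n d E (0\<^sub>m (n*d) (n*d))" by (rule blk_zero)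
next
  fix c A acc assume "A \<in> {kron A B |A B. A \<in> graph_ncg n E \<and> B \<in> scalar_ncg d}" "blk n d E acc"
  then show "blk n d E (c \<cdot>\<^sub>m A + acc)" using blk_kron[OF assms(1)] blk_lin by blast
qed


definition Em :: "nat \<Rightarrow> nat \<Rightarrow> nat \<Rightarrow> (nat \<Rightarrow> complex vec) \<Rightarrow> complex mat" where
  "Em n d m u = mat (n*d) m (\<lambda>(r,a). if r div d = a then u a $ (r mod d) else 0)"

lemma Em_carrier: "Em n d m u \<in> carrier_mat (n*d) m"
  unfolding Em_def by simp

lemma Em_entry:
  assumes "a < m" "b < m" "m \<le> n" "p < d"
  shows "Em n d m u $$ (a*d+p, b) = (if a = b then u a $ p else 0)"
proof -
  have "(a+1)*d \<le> n*d" using assms by (intro mult_le_mono1) simp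
  hence "a*d+p < n*d" using assms by simp
  moreover have "(a*d+p) div d = a" "(a*d+p) mod d = p" using assms(4) by auto
  ultimately show ?thesis using assms unfolding Em_def by simp
qed

lemma adjK:
  assumes K: "K \<in> carrier_mat (n*d) k" and a: "a < m" and mn: "m \<le> n" and s: "s < k"
  shows "(mat_adjoint (Em n d m u) * K) $$ (a,s) = (\<Sum>p<d. cnj (u a $ p) * K $$ (a*d+p, s))"
proof -
  have "(mat_adjoint (Em n d m u) * K) $$ (a,s) = (\<Sum>r<n*d. mat_adjoint (Em n d m u) $$ (a,r) * K $$ (r,s))"
    by (rule mult_entry[OF adj_carrier[OF Em_carrier] K a s])
  also have "\<dots> = (\<Sum>r<n*d. cnj (Em n d m u $$ (r,a)) * K $$ (r,s))"
    by (rule sum.cong) (auto simp: adj_entry[OF Em_carrier] a)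
  also have "\<dots> = (\<Sum>p<d. cnj (Em n d m u $$ (a*d+p,a)) * K $$ (a*d+p,s))"
    by (rule block_sum) (use a mn in \<open>auto simp: Em_def\<close>)
  also have "\<dots> = (\<Sum>p<d. cnj (u a $ p) * K $$ (a*d+p, s))"
    by (rule sum.cong) (auto simp: Em_entry a mn)
  finally show ?thesis .
qed


lemma ad_lt: "(a::nat) < n \<Longrightarrow> p < d \<Longrightarrow> a*d+p < n*d"
proof -
  assume "a < n" "p < d"
  moreover have "(a+1)*d \<le> n*d" using \<open>a < n\<close> by (intro mult_le_mono1) simp
  ultimately show ?thesis by simp
qed

lemma offdiag:
  assumes B: "blk n d E K" and u: "orth_rep n E d u" and a: "a < m" and b: "b < m" and mn: "m \<le> n"
    and ab: "a \<noteq> b" and d: "0 < d"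
  shows "(mat_adjoint (Em n d m u) * K * Em n d m u) $$ (a,b) = 0"
proof -
  have K: "K \<in> carrier_mat (n*d) (n*d)" using B by (simp add: blk_def)
  have an: "a < n" "b < n" using a b mn by auto
  have X: "mat_adjoint (Em n d m u) * K \<in> carrier_mat m (n*d)"
    by (rule mult_carrier_mat[OF adj_carrier[OF Em_carrier] K])
  have "(mat_adjoint (Em n d m u) * K * Em n d m u) $$ (a,b)
     = (\<Sum>s<n*d. (mat_adjoint (Em n d m u) * K) $$ (a,s) * Em n d m u $$ (s,b))"
    by (rule mult_entry[OF X Em_carrier a b])
  also have "\<dots> = (\<Sum>q<d. (mat_adjoint (Em n d m u) * K) $$ (a,b*d+q) * Em n d m u $$ (b*d+q,b))"
    by (rule block_sum) (use an b in \<open>auto simp: Em_def\<close>)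
  also have "\<dots> = (\<Sum>q<d. (cnj (u a $ q) * K $$ (a*d, b*d)) * u b $ q)"
  proof (rule sum.cong[OF refl])
    fix q assume q: "q \<in> {..<d}"
    have "(mat_adjoint (Em n d m u) * K) $$ (a,b*d+q) = (\<Sum>p<d. cnj (u a $ p) * K $$ (a*d+p, b*d+q))"
      by (rule adjK[OF K a mn ad_lt[OF an(2)]]) (use q in auto)
    also have "\<dots> = (\<Sum>p<d. if p = q then cnj (u a $ p) * K $$ (a*d, b*d) else 0)"
    proof (rule sum.cong[OF refl])
      fix p assume p: "p \<in> {..<d}"
      have "K $$ (a*d+p, b*d+q) = (if (a*d+p) mod d = (b*d+q) mod d then K $$ ((a*d+p) div d * d, (b*d+q) div d * d) else 0)"
        using blkD1[OF B ad_lt[OF an(1)] ad_lt[OF an(2)]] p q by blast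
      also have "\<dots> = (if p = q then K $$ (a*d, b*d) else 0)" using p q by auto
      finally show "cnj (u a $ p) * K $$ (a*d+p, b*d+q) = (if p = q then cnj (u a $ p) * K $$ (a*d, b*d) else 0)"
        by simp
    qed
    also have "\<dots> = cnj (u a $ q) * K $$ (a*d, b*d)" using q by (simp add: sum.delta)
    finally show "(mat_adjoint (Em n d m u) * K) $$ (a,b*d+q) * Em n d m u $$ (b*d+q,b) = (cnj (u a $ q) * K $$ (a*d, b*d)) * u b $ q"
      using Em_entry[OF b b mn, where u=u] q by simp
  qed
  also have "\<dots> = K $$ (a*d, b*d) * cinner (u a) (u b)"
  proof -
    have dua: "dim_vec (u a) = d" using u an unfolding orth_rep_def by auto
    show ?thesis unfolding cinner_def dua sum_distrib_left by (rule sum.cong) (simp_all add: mult_ac)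
  qed
  also have "\<dots> = 0"
  proof (cases "E a b")
    case True
    then show ?thesis using u an unfolding orth_rep_def by auto
  next
    case False
    have "K $$ (a*d+0, b*d+0) = 0"
      using blkD2[OF B ad_lt[OF an(1) d] ad_lt[OF an(2) d]] ab False d by auto
    then show ?thesis by simp
  qed
  finally show ?thesis .
qed

lemma adj_id:
  assumes u: "orth_rep n E d u" and mn: "m \<le> n"
  shows "mat_adjoint (Em n d m u) * Em n d m u = 1\<^sub>m m"
proof (rule eq_matI)
  fix a b assume a: "a < dim_row (1\<^sub>m m)" and b: "b < dim_col (1\<^sub>m m)"
  hence a: "a < m" and b: "b < m" by auto
  have an: "a < n" "b < n" using a b mn by auto
  have "(mat_adjoint (Em n d m u) * Em n d m u) $$ (a,b) = (\<Sum>p<d. cnj (u a $ p) * Em n d m u $$ (a*d+p, b))"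
    by (rule adjK[OF Em_carrier a mn]) (use b mn in auto)
  also have "\<dots> = (\<Sum>p<d. if a = b then cnj (u a $ p) * u b $ p else 0)"
  proof (rule sum.cong[OF refl])
    fix p assume "p \<in> {..<d}"
    then show "cnj (u a $ p) * Em n d m u $$ (a*d+p, b) = (if a = b then cnj (u a $ p) * u b $ p else 0)"
      using Em_entry[OF a b mn, where u=u] by simp
  qed
  also have "\<dots> = (if a = b then cinner (u a) (u b) else 0)"
  proof -
    have dua: "dim_vec (u a) = d" using u an unfolding orth_rep_def by auto
    show ?thesis unfolding cinner_def dua by simp
  qed
  also have "\<dots> = 1\<^sub>m m $$ (a,b)"
  proof -
    have c: "cinner (u a) (u a) = 1" using u an unfolding orth_rep_def by blast
    show ?thesis
    proof (cases "a = b")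
      case True
      have "1\<^sub>m m $$ (a,b) = 1" using a b True by simp
      then show ?thesis using True c by simp
    next
      case False
      then show ?thesis using a b by simp
    qed
  qed
  finally show "(mat_adjoint (Em n d m u) * Em n d m u) $$ (a,b) = 1\<^sub>m m $$ (a,b)" .
next
  have "mat_adjoint (Em n d m u) * Em n d m u \<in> carrier_mat m m"
    by (rule mult_carrier_mat[OF adj_carrier[OF Em_carrier] Em_carrier])
  then show "dim_row (mat_adjoint (Em n d m u) * Em n d m u) = dim_row (1\<^sub>m m)"
    "dim_col (mat_adjoint (Em n d m u) * Em n d m u) = dim_col (1\<^sub>m m)" by auto
qed


lemma orth_exists:
  assumes "simple_graph n E"
  shows "orth_rep n E n (\<lambda>x. unit_vec n x)"
proof -
  have ci: "cinner (unit_vec n x) (unit_vec n y) = (if x = y then 1 else 0)" if "x < n" "y < n" for x y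
  proof -
    have "cinner (unit_vec n x) (unit_vec n y) = (\<Sum>i<n. if i = x then (if i = y then 1 else 0) else 0)"
      unfolding cinner_def by (rule sum.cong) (auto simp: unit_vec_def)
    also have "\<dots> = (if x = y then 1 else 0)" using that by (simp add: sum.delta)
    finally show ?thesis .
  qed
  show ?thesis unfolding orth_rep_def
  proof (intro conjI allI impI)
    fix x y assume "x < n" "y < n" "E x y"
    then have "x \<noteq> y" using assms unfolding simple_graph_def by auto
    then show "cinner (unit_vec n x) (unit_vec n y) = 0" using ci \<open>x < n\<close> \<open>y < n\<close> by simp
  qed (use ci in auto)
qed

lemma sum_pad:
  assumes "(d0::nat) \<le> d"
  shows "(\<Sum>i<d. if i < d0 then g i else (0::complex)) = (\<Sum>i<d0. g i)"
proof -
  have "(\<Sum>i<d. if i < d0 then g i else (0::complex)) = (\<Sum>i\<in>{..<d} \<inter> {i. i < d0}. g i)"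
    by (simp add: sum.If_cases)
  also have "{..<d} \<inter> {i. i < d0} = {..<d0}" using assms by auto
  finally show ?thesis by simp
qed

lemma orth_pad:
  assumes u: "orth_rep n E d0 u" and dd: "d0 \<le> d"
  shows "orth_rep n E d (\<lambda>x. vec d (\<lambda>i. if i < d0 then u x $ i else 0))"
proof -
  define v where "v = (\<lambda>x. vec d (\<lambda>i. if i < d0 then u x $ i else 0))"
  have ci: "cinner (v x) (v y) = cinner (u x) (u y)" if "x < n" "y < n" for x y
  proof -
    have dx: "dim_vec (u x) = d0" using u that unfolding orth_rep_def by auto
    have "cinner (v x) (v y) = (\<Sum>i<d. if i < d0 then cnj (u x $ i) * u y $ i else 0)"
      unfolding cinner_def v_def by (rule sum.cong) auto
    also have "\<dots> = cinner (u x) (u y)" unfolding cinner_def dx by (rule sum_pad[OF dd])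
    finally show ?thesis .
  qed
  show ?thesis unfolding v_def[symmetric] orth_rep_def
  proof (intro conjI allI impI)
    fix x assume x: "x < n"
    show "v x \<in> carrier_vec d" unfolding v_def by simp
    show "cinner (v x) (v x) = 1" using ci[OF x x] u x unfolding orth_rep_def by simp
  next
    fix x y assume "x < n" "y < n" "E x y"
    then show "cinner (v x) (v y) = 0" using ci u unfolding orth_rep_def by simp
  qed
qed

theorem lemma3p9:
  fixes n d M :: nat and E :: "nat \<Rightarrow> nat \<Rightarrow> bool" and C :: "nat \<Rightarrow> nat set"
  assumes "simple_graph n E"
    and "0 < d" and "0 < M"
    and "orth_rank n E \<le> d"
    and "\<forall>i<M. C i \<subseteq> {..<n} \<and> card (C i) = d \<and>
              (\<forall>x\<in>C i. \<forall>y\<in>C i. x \<noteq> y \<longrightarrow> E x y)"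
    and "\<forall>i<M. \<forall>j<M. i \<noteq> j \<longrightarrow> C i \<inter> C j = {}"
  shows "ncg_le (M * d) (diag_ncg (M * d)) (n * d) (ncg_tensor n d (graph_ncg n E) (scalar_ncg d))"
proof -
  have "\<exists>u. orth_rep n E (orth_rank n E) u"
    unfolding orth_rank_def by (rule LeastI_ex) (use orth_exists[OF assms(1)] in blast)
  then obtain u0 where u0: "orth_rep n E (orth_rank n E) u0" by blast
  define u where "u = (\<lambda>x. vec d (\<lambda>i. if i < orth_rank n E then u0 x $ i else 0))"
  have u: "orth_rep n E d u" unfolding u_def by (rule orth_pad[OF u0 assms(4)])
  have fin: "finite (C i)" if "i < M" for i
    using assms(5) that finite_subset[of "C i" "{..<n}"] by auto
  have "card (\<Union>i\<in>{..<M}. C i) = (\<Sum>i<M. card (C i))"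
    by (rule card_UN_disjoint) (use fin assms(6) in auto)
  also have "\<dots> = M * d" using assms(5) by simp
  finally have cu: "card (\<Union>i\<in>{..<M}. C i) = M * d" .
  have "(\<Union>i\<in>{..<M}. C i) \<subseteq> {..<n}" using assms(5) by auto
  from card_mono[OF _ this] cu have mn: "M * d \<le> n" by simp
  define F where "F = Em n d (M*d) u"
  show ?thesis unfolding ncg_le_def
  proof (rule exI[of _ "[F]"], intro conjI ballI allI impI)
    show "G \<in> carrier_mat (n * d) (M * d)" if "G \<in> set [F]" for G
      using that Em_carrier unfolding F_def by auto
  next
    have "mat_adjoint F * F = 1\<^sub>m (M*d)" unfolding F_def by (rule adj_id[OF u mn])
    then show "foldr (\<lambda>F acc. mat_adjoint F * F + acc) [F] (0\<^sub>m (M * d) (M * d)) = 1\<^sub>m (M * d)"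
      by simp
  next
    fix i j A assume i: "i < length [F]" and j: "j < length [F]"
      and A: "A \<in> ncg_tensor n d (graph_ncg n E) (scalar_ncg d)"
    have B: "blk n d E A" by (rule blk_tensor[OF assms(2) A])
    have K: "A \<in> carrier_mat (n*d) (n*d)" using B by (simp add: blk_def)
    have X: "mat_adjoint F * A * F \<in> carrier_mat (M*d) (M*d)" unfolding F_def
      by (rule mult_carrier_mat[OF mult_carrier_mat[OF adj_carrier[OF Em_carrier] K] Em_carrier])
    have "mat_adjoint F * A * F \<in> diag_ncg (M * d)"
      unfolding diag_ncg_def using X offdiag[OF B u _ _ mn _ assms(2)] unfolding F_def by auto
    then show "mat_adjoint ([F] ! i) * A * [F] ! j \<in> diag_ncg (M * d)" using i j by simp
  qed
qed

end
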